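(* Let $D$ be a friendship digraph and let $u,v$ be two distinct vertices of $D$. If $(u,v)\notin A(D)$ or $(v,u)\notin A(D)$, then $d^+(u)=d^+(v)$.
   Context: All digraphs are finite and have neither loops nor parallel arcs (a pair of opposite arcs $(u,v)$ and $(v,u)$ is allowed). $A(D)$ is the arc set and $d^+(v)$ the outdegree of $v$. A friendship digraph is a nontrivial digraph (at least two vertices) in which any two distinct vertices have exactly one common out-neighbor. *)

theory Defs
  imports Main
begin

text \<open>A digraph is given by a finite vertex set V and an arc set A \<subseteq> V \<times> V
  without loops (parallel arcs are impossible since A is a set; opposite arcs allowed).\<close>
definition digraph :: "'a set \<Rightarrow> ('a \<times> 'a) set \<Rightarrow> bool" where
  "digraph V A \<longleftrightarrow> finite V \<and> A \<subseteq> V \<times> V \<and> (\<forall>v. (v, v) \<notin> A)"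

definition out_nbrs :: "('a \<times> 'a) set \<Rightarrow> 'a \<Rightarrow> 'a set" where
  "out_nbrs A v = {w. (v, w) \<in> A}"

definition outdeg :: "('a \<times> 'a) set \<Rightarrow> 'a \<Rightarrow> nat" where
  "outdeg A v = card (out_nbrs A v)"

definition friendship_digraph :: "'a set \<Rightarrow> ('a \<times> 'a) set \<Rightarrow> bool" where
  "friendship_digraph V A \<longleftrightarrow> digraph V A \<and> card V \<ge> 2 \<and>
     (\<forall>x\<in>V. \<forall>y\<in>V. x \<noteq> y \<longrightarrow> (\<exists>!w. w \<in> V \<and> (x, w) \<in> A \<and> (y, w) \<in> A))"

end

theory Submission
  imports Defs Complex_Main
begin

lemma card_part:
  assumes "finite V"
  shows "card {p\<in>V. P p} + card {p\<in>V. \<not> P p} = card V"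
proof -
  have "{p\<in>V. P p} \<union> {p\<in>V. \<not> P p} = V" by blast
  moreover have "card ({p\<in>V. P p} \<union> {p\<in>V. \<not> P p}) = card {p\<in>V. P p} + card {p\<in>V. \<not> P p}"
    by (rule card_Un_disjoint) (use assms in auto)
  ultimately show ?thesis by simp
qed

lemma key:
  assumes fd: "friendship_digraph V A" and xV: "x \<in> V" and zV: "z \<in> V" and xz: "(x, z) \<notin> A"
  shows "card {p\<in>V. (p, z) \<in> A} \<le> card {w\<in>V. (x, w) \<in> A}"
proof -
  have fin: "finite V" and AV: "A \<subseteq> V \<times> V"
    and uq: "\<And>a b. a \<in> V \<Longrightarrow> b \<in> V \<Longrightarrow> a \<noteq> b \<Longrightarrow> \<exists>!w. w \<in> V \<and> (a, w) \<in> A \<and> (b, w) \<in> A"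
    using fd unfolding friendship_digraph_def digraph_def by auto
  define f where "f p = (THE w. w \<in> V \<and> (x, w) \<in> A \<and> (p, w) \<in> A)" for p
  have fp: "f p \<in> V \<and> (x, f p) \<in> A \<and> (p, f p) \<in> A" if "p \<in> V" "(p, z) \<in> A" for p
  proof -
    have "p \<noteq> x" using that xz by auto
    then have "\<exists>!w. w \<in> V \<and> (x, w) \<in> A \<and> (p, w) \<in> A" using uq xV that by auto
    then show ?thesis unfolding f_def by (rule theI')
  qed
  have inj: "inj_on f {p\<in>V. (p, z) \<in> A}"
  proof (rule inj_onI)
    fix p q assume p: "p \<in> {p\<in>V. (p, z) \<in> A}" and q: "q \<in> {p\<in>V. (p, z) \<in> A}" and e: "f p = f q"
    show "p = q"
    proof (rule ccontr)
      assume "p \<noteq> q"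
      then have u: "\<exists>!w. w \<in> V \<and> (p, w) \<in> A \<and> (q, w) \<in> A" using uq p q by auto
      have "f p = z" using u fp[of p] fp[of q] p q e zV by auto
      then show False using fp[of p] p xz by auto
    qed
  qed
  have "f ` {p\<in>V. (p, z) \<in> A} \<subseteq> {w\<in>V. (x, w) \<in> A}" using fp by auto
  then show ?thesis using card_inj_on_le[OF inj] fin by auto
qed

lemma main:
  assumes fd: "friendship_digraph V A" and uV: "u \<in> V" and vV: "v \<in> V" and uv: "(u, v) \<notin> A"
  shows "outdeg A u = outdeg A v"
proof -
  have fin: "finite V" and AV: "A \<subseteq> V \<times> V" and irr: "\<And>x. (x, x) \<notin> A"
    using fd unfolding friendship_digraph_def digraph_def by auto
  define ind where "ind z = card {p\<in>V. (p, z) \<notin> A}" for z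
  define outd where "outd p = card {z\<in>V. (p, z) \<notin> A}" for p
  have on: "out_nbrs A x = {w\<in>V. (x, w) \<in> A}" for x
    using AV unfolding out_nbrs_def by auto
  have od: "outdeg A x + outd x = card V" for x
    unfolding outdeg_def on outd_def using card_part[OF fin] by simp
  have idg: "card {p\<in>V. (p, z) \<in> A} + ind z = card V" for z
    unfolding ind_def using card_part[OF fin] by simp
  have le: "outd p \<le> ind z" if "p \<in> V" "z \<in> V" "(p, z) \<notin> A" for p z
    using key[OF fd that] od[of p] idg[of z] unfolding outdeg_def on by linarith
  have ipos: "ind z > 0" if "z \<in> V" for z
    unfolding ind_def using that irr fin by (subst card_gt_0_iff) auto
  have opos: "outd p > 0" if "p \<in> V" for p
    unfolding outd_def using that irr fin by (subst card_gt_0_iff) auto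
  define g where "g p z = (if (p, z) \<notin> A then 1 / real (outd p) - 1 / real (ind z) else 0)" for p z
  have S1: "(\<Sum>p\<in>V. \<Sum>z\<in>V. (if (p, z) \<notin> A then 1 / real (outd p) else 0)) = real (card V)"
  proof -
    have "(\<Sum>z\<in>V. (if (p, z) \<notin> A then 1 / real (outd p) else 0)) = 1" if "p \<in> V" for p
      using sum.inter_filter[OF fin, of "\<lambda>_. 1 / real (outd p)" "\<lambda>z. (p, z) \<notin> A", symmetric]
        opos[OF that] unfolding outd_def by simp
    then show ?thesis by simp
  qed
  have S2: "(\<Sum>p\<in>V. \<Sum>z\<in>V. (if (p, z) \<notin> A then 1 / real (ind z) else 0)) = real (card V)"
  proof -
    have "(\<Sum>p\<in>V. (if (p, z) \<notin> A then 1 / real (ind z) else 0)) = 1" if "z \<in> V" for z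
      using sum.inter_filter[OF fin, of "\<lambda>_. 1 / real (ind z)" "\<lambda>p. (p, z) \<notin> A", symmetric]
        ipos[OF that] unfolding ind_def by simp
    then have "(\<Sum>z\<in>V. \<Sum>p\<in>V. (if (p, z) \<notin> A then 1 / real (ind z) else 0)) = real (card V)" by simp
    then show ?thesis by (subst sum.swap) simp
  qed
  have gnn: "g p z \<ge> 0" if "p \<in> V" "z \<in> V" for p z
  proof (cases "(p, z) \<in> A")
    case False
    have "real (outd p) \<le> real (ind z)" using le[OF that False] by simp
    then have "1 / real (ind z) \<le> 1 / real (outd p)"
      using opos[OF that(1)] by (intro divide_left_mono) auto
    then show ?thesis unfolding g_def using False by simp
  qed (simp add: g_def)
  have "(\<Sum>p\<in>V. \<Sum>z\<in>V. g p z) = (\<Sum>p\<in>V. \<Sum>z\<in>V. (if (p, z) \<notin> A then 1 / real (outd p) else 0))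
        - (\<Sum>p\<in>V. \<Sum>z\<in>V. (if (p, z) \<notin> A then 1 / real (ind z) else 0))"
    unfolding g_def by (simp add: sum_subtractf[symmetric] if_distrib cong: if_cong)
  then have "(\<Sum>p\<in>V. \<Sum>z\<in>V. g p z) = 0" using S1 S2 by simp
  then have "\<forall>p\<in>V. (\<Sum>z\<in>V. g p z) = 0"
    using fin gnn by (subst sum_nonneg_eq_0_iff[symmetric]) (auto intro: sum_nonneg)
  then have "\<forall>p\<in>V. \<forall>z\<in>V. g p z = 0"
    using fin gnn by (simp add: sum_nonneg_eq_0_iff)
  then have eq: "outd p = ind z" if "p \<in> V" "z \<in> V" "(p, z) \<notin> A" for p z
  proof -
    have "g p z = 0"
      using \<open>\<forall>p\<in>V. \<forall>z\<in>V. g p z = 0\<close> that by blast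
    then have "1 / real (outd p) - 1 / real (ind z) = 0"
      using that(3) unfolding g_def by (simp del: divide_eq_0_iff)
    then have "1 / real (outd p) = 1 / real (ind z)" by simp
    then show ?thesis using opos[OF that(1)] ipos[OF that(2)] by (simp add: field_simps)
  qed
  have "outd u = outd v" using eq[OF uV vV uv] eq[OF vV vV irr] by simp
  then show ?thesis using od[of u] od[of v] by linarith
qed

theorem proposition2p7:
  assumes "friendship_digraph V A"
    and "u \<in> V" and "v \<in> V" and "u \<noteq> v"
    and "(u, v) \<notin> A \<or> (v, u) \<notin> A"
  shows "outdeg A u = outdeg A v"
  using assms main[of V A u v] main[of V A v u] by auto

end
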